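(* Let $\beta>0$ and $d,k\in\mathbb{N}$ with $k\ge1$, and suppose $$1\le\beta\le 1+\tfrac12\log\!\Big(\frac{d}{8\max\{2k,28\}}\Big).$$ Let $P^1,\dots,P^d$ be independent samples from $\mathsf{Beta}(\beta,\beta)$. Then $$\mathbb{E}\Big[\max_{s\subset[d]:\,|s|=k}\ \sum_{j\in s}P^j\Big]\ge \frac34 k.$$
   Context: $\mathsf{Beta}(\alpha,\beta)$ is the distribution on $[0,1]$ with density proportional to $p^{\alpha-1}(1-p)^{\beta-1}$. $\log$ denotes the natural logarithm; $[d]=\{1,\dots,d\}$. *)

theory Defs
  imports "HOL-Probability.Probability"
begin

definition beta_density :: "real \<Rightarrow> real \<Rightarrow> real \<Rightarrow> real" where
  "beta_density a b x =
     (if 0 < x \<and> x < 1 then x powr (a - 1) * (1 - x) powr (b - 1) / Beta a b else 0)"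

definition beta_distr :: "real \<Rightarrow> real \<Rightarrow> real measure" where
  "beta_distr a b = density lborel (\<lambda>x. ennreal (beta_density a b x))"

end

theory Submission
  imports Defs
begin


lemma Beta_pos_real: "a > 0 \<Longrightarrow> b > 0 \<Longrightarrow> Beta a b > (0::real)"
  unfolding Beta_def using Gamma_real_pos_exp[of a] Gamma_real_pos_exp[of b] Gamma_real_pos_exp[of "a+b"]
  by simp

lemma beta_density_eq:
  assumes "a > 0" "b > 0"
  shows "beta_density a b x = indicator {0..1} x * (x powr (a-1) * (1-x) powr (b-1) / Beta a b)"
  unfolding beta_density_def by (auto simp: indicator_def)

lemma beta_density_nonneg: "a > 0 \<Longrightarrow> b > 0 \<Longrightarrow> beta_density a b x \<ge> 0"
  unfolding beta_density_def using Beta_pos_real[of a b] by auto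

lemma beta_density_meas[measurable]: "beta_density a b \<in> borel_measurable borel"
  unfolding beta_density_def by measurable

lemma prob_space_beta:
  assumes "a > 0" "b > 0"
  shows "prob_space (beta_distr a b)"
proof
  have "((\<lambda>t. t powr (a - 1) * (1 - t) powr (b - 1) / Beta a b) has_integral Beta a b / Beta a b) {0..1}"
    by (rule has_integral_divide[OF has_integral_Beta_real[OF assms]])
  then have "((\<lambda>t. t powr (a - 1) * (1 - t) powr (b - 1) / Beta a b) has_integral 1) {0..1}"
    using Beta_pos_real[OF assms] by simp
  then have "integral\<^sup>N lborel (\<lambda>x. indicator {0..1} x * (x powr (a - 1) * (1 - x) powr (b - 1) / Beta a b)) = 1"
    by (subst nn_integral_has_integral_lebesgue) (use Beta_pos_real[OF assms] in auto)
  moreover have "emeasure (beta_distr a b) UNIV = integral\<^sup>N lborel (\<lambda>x. ennreal (beta_density a b x))"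
    unfolding beta_distr_def by (subst emeasure_density) auto
  moreover have "space (beta_distr a b) = UNIV" by (simp add: beta_distr_def)
  ultimately show "emeasure (beta_distr a b) (space (beta_distr a b)) = 1"
    by (simp add: beta_density_eq[OF assms])
qed

lemma Beta_le:
  fixes \<beta> :: real
  assumes "\<beta> \<ge> 1"
  shows "Beta \<beta> \<beta> \<le> (1/4) powr (\<beta>-1)"
proof -
  have c: "((\<lambda>_. (1/4) powr (\<beta>-1)) has_integral (1/4) powr (\<beta>-1)) {0..1::real}"
    using has_integral_const_real[of "(1/4) powr (\<beta>-1)" 0 "1::real"] by simp
  have le: "x powr (\<beta> - 1) * (1 - x) powr (\<beta> - 1) \<le> (1/4) powr (\<beta>-1)" if "x \<in> {0..1}" for x::real
  proof -
    have "x powr (\<beta> - 1) * (1 - x) powr (\<beta> - 1) = (x * (1-x)) powr (\<beta>-1)"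
      using that by (simp add: powr_mult)
    also have "\<dots> \<le> (1/4) powr (\<beta>-1)"
    proof (rule powr_mono2)
      have "0 \<le> (x - 1/2)^2" by simp
      then show "x * (1-x) \<le> 1/4" by (simp add: power2_eq_square algebra_simps)
    qed (use that assms in auto)
    finally show ?thesis .
  qed
  have B: "((\<lambda>t. t powr (\<beta> - 1) * (1 - t) powr (\<beta> - 1)) has_integral Beta \<beta> \<beta>) {0..1}"
    using has_integral_Beta_real[of \<beta> \<beta>] assms by simp
  show ?thesis using has_integral_le[OF B c] le by blast
qed

lemma tail_lower:
  fixes \<beta> t :: real
  assumes b1: "\<beta> \<ge> 1" and t: "1/2 \<le> t" "t < 1"
  shows "measure (beta_distr \<beta> \<beta>) {t<..} \<ge> (4*t) powr (\<beta>-1) * (1-t) powr \<beta> / \<beta>"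
proof -
  define a where "a = \<beta> - 1"
  have a0: "a \<ge> 0" using b1 by (simp add: a_def)
  define h where "h x = (4*t) powr a * (1-x) powr a" for x
  define G where "G x = - ((4*t) powr a * (1-x) powr \<beta> / \<beta>)" for x
  have "(h has_integral (G 1 - G t)) {t..1}"
  proof (rule fundamental_theorem_of_calculus_interior)
    show "continuous_on {t..1} G" unfolding G_def using b1
      by (intro continuous_intros continuous_on_powr') auto
    fix x assume x: "x \<in> {t<..<1}"
    have "((\<lambda>x. (1-x) powr \<beta>) has_real_derivative \<beta> * (1-x) powr (\<beta> - 1) * (-1)) (at x)"
      using x by (auto intro!: derivative_eq_intros)
    then have "(G has_real_derivative h x) (at x)"
      unfolding G_def h_def a_def using b1
      by (auto intro!: derivative_eq_intros elim!: DERIV_cong)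
    then show "(G has_vector_derivative h x) (at x)"
      by (simp add: has_real_derivative_iff_has_vector_derivative)
  qed (use t in auto)
  moreover have "G 1 - G t = (4*t) powr a * (1-t) powr \<beta> / \<beta>"
    unfolding G_def using b1 by simp
  ultimately have hi: "(h has_integral ((4*t) powr a * (1-t) powr \<beta> / \<beta>)) {t..1}" by simp
  have hnn: "h x \<ge> 0" for x unfolding h_def by simp
  have I: "integral\<^sup>N lborel (\<lambda>x. indicator {t..1} x * h x) = (4*t) powr a * (1-t) powr \<beta> / \<beta>"
    by (rule nn_integral_has_integral_lebesgue[OF _ hi]) (simp add: hnn)
  have bpos: "\<beta> > 0" using b1 by simp
  have Bp: "Beta \<beta> \<beta> > 0" using Beta_pos_real[OF bpos bpos] .
  have Ble: "Beta \<beta> \<beta> \<le> (1/4) powr a" using Beta_le[OF b1] by (simp add: a_def)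
  have pw: "ennreal (indicator {t..1} x * h x) \<le> ennreal (beta_density \<beta> \<beta> x) * indicator {t<..} x"
    if "x \<noteq> t" for x
  proof (cases "t < x \<and> x < 1")
    case True
    have "h x = (4*t) powr a * (1-x) powr a" by (simp add: h_def)
    also have "\<dots> \<le> (4*x) powr a * (1-x) powr a"
      using True t a0 by (intro mult_right_mono powr_mono2) auto
    also have "\<dots> = x powr a * (1-x) powr a / (1/4) powr a"
      using True t by (simp add: powr_mult powr_divide)
    also have "\<dots> \<le> x powr a * (1-x) powr a / Beta \<beta> \<beta>"
      using Bp Ble by (intro divide_left_mono) auto
    also have "\<dots> = beta_density \<beta> \<beta> x"
      using True t by (simp add: beta_density_def a_def)
    finally show ?thesis using True by (auto simp: indicator_def intro!: ennreal_leI)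
  next
    case False
    then have "indicator {t..1} x * h x = 0"
      using that by (auto simp: indicator_def h_def)
    then show ?thesis by (metis ennreal_0 zero_le)
  qed
  have "integral\<^sup>N lborel (\<lambda>x. ennreal (indicator {t..1} x * h x)) \<le> integral\<^sup>N lborel (\<lambda>x. ennreal (beta_density \<beta> \<beta> x) * indicator {t<..} x)"
  proof (rule nn_integral_mono_AE)
    show "AE x in lborel. ennreal (indicator {t..1} x * h x) \<le> ennreal (beta_density \<beta> \<beta> x) * indicator {t<..} x"
      using AE_lborel_singleton[of t] by eventually_elim (rule pw)
  qed
  also have "\<dots> = emeasure (beta_distr \<beta> \<beta>) {t<..}"
    unfolding beta_distr_def by (rule emeasure_density[symmetric]) auto
  finally have le: "ennreal ((4*t) powr a * (1-t) powr \<beta> / \<beta>) \<le> emeasure (beta_distr \<beta> \<beta>) {t<..}"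
    using I by simp
  interpret prob_space "beta_distr \<beta> \<beta>" using prob_space_beta[OF bpos bpos] .
  have "emeasure (beta_distr \<beta> \<beta>) {t<..} = ennreal (measure (beta_distr \<beta> \<beta>) {t<..})"
    by (rule emeasure_eq_measure)
  with le have "ennreal ((4*t) powr a * (1-t) powr \<beta> / \<beta>) \<le> ennreal (measure (beta_distr \<beta> \<beta>) {t<..})"
    by simp
  then show ?thesis
    by (subst (asm) ennreal_le_iff) (auto simp: a_def)
qed



lemma block_bound:
  fixes B :: "real measure" and d k m :: nat and t :: real
  assumes PB: "prob_space B" and sB: "sets B = sets borel"
    and AEB: "AE x in B. 0 \<le> x \<and> x \<le> 1"
    and km: "k * m \<le> d" and m1: "m \<ge> 1" and t0: "0 \<le> t"
  shows "(\<integral>P. Max {(\<Sum>j\<in>s. P j) | s. s \<subseteq> {1..d} \<and> card s = k}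
            \<partial>(PiM {1..d} (\<lambda>_. B))) \<ge> real k * t * (1 - measure B {..t} ^ m)"
proof -
  interpret B: prob_space B by fact
  have spB: "space B = UNIV" using sets_eq_imp_space_eq[OF sB] by simp
  interpret P: finite_product_prob_space "\<lambda>_. B" "{1..d}"
    by unfold_locales (auto simp: PB prob_space_imp_sigma_finite)
  define I where "I = {1..d}"
  define \<Omega> where "\<Omega> = PiM I (\<lambda>_. B)"
  define S where "S = {s. s \<subseteq> I \<and> card s = k}"
  define f where "f P = Max ((\<lambda>s. \<Sum>j\<in>s. P j) ` S)" for P :: "nat \<Rightarrow> real"
  have feq: "(\<lambda>P. Max {(\<Sum>j\<in>s. P j) | s. s \<subseteq> {1..d} \<and> card s = k}) = f"
    unfolding f_def S_def I_def by (intro ext arg_cong[where f=Max]) auto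
  have finS: "finite S" unfolding S_def I_def
    by (rule finite_subset[of _ "Pow {1..d}"]) auto
  have kd: "k \<le> d" using km m1 by (metis le_trans mult_le_mono2 nat_mult_1_right)
  have neS: "S \<noteq> {}"
  proof -
    have "{1..k} \<in> S" unfolding S_def I_def using kd by auto
    then show ?thesis by auto
  qed
  have spO: "space \<Omega> = PiE I (\<lambda>_. UNIV)" unfolding \<Omega>_def by (simp add: space_PiM spB)
  have AE01: "AE P in \<Omega>. \<forall>j\<in>I. 0 \<le> P j \<and> P j \<le> 1"
  proof (subst AE_ball_countable)
    show "countable I" unfolding I_def by simp
    show "\<forall>j\<in>I. AE P in \<Omega>. 0 \<le> P j \<and> P j \<le> 1"
      unfolding \<Omega>_def using AE_PiM_component[of I "\<lambda>_. B" _ "\<lambda>x. 0 \<le> x \<and> x \<le> 1"] PB AEB by blast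
  qed
  have comp: "(\<lambda>P. P j) \<in> borel_measurable \<Omega>" if "j \<in> I" for j
    using measurable_component_singleton[of j I "\<lambda>_. B"] that
    by (simp add: \<Omega>_def measurable_cong_sets[OF refl sB])
  have fmeas: "f \<in> borel_measurable \<Omega>"
    unfolding f_def
  proof (rule borel_measurable_Max[OF finS])
    fix s assume "s \<in> S"
    then have "s \<subseteq> I" by (simp add: S_def)
    then show "(\<lambda>P. \<Sum>j\<in>s. P j) \<in> borel_measurable \<Omega>"
      by (intro borel_measurable_sum comp) auto
  qed
  have fint: "integrable \<Omega> f"
    unfolding \<Omega>_def I_def
  proof (rule P.integrable_const_bound[where B="real k"])
    show "f \<in> borel_measurable (PiM {1..d} (\<lambda>_. B))" using fmeas by (simp add: \<Omega>_def I_def)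
    show "AE P in PiM {1..d} (\<lambda>_. B). norm (f P) \<le> real k"
      using AE01 unfolding \<Omega>_def I_def
    proof eventually_elim
      case (elim P)
      have "f P \<in> (\<lambda>s. \<Sum>j\<in>s. P j) ` S" unfolding f_def using finS neS by (intro Max_in) auto
      then obtain s where s: "s \<in> S" "f P = (\<Sum>j\<in>s. P j)" by auto
      have sI: "s \<subseteq> I" and cs: "card s = k" using s(1) by (auto simp: S_def)
      have "0 \<le> (\<Sum>j\<in>s. P j)" using elim sI unfolding I_def by (intro sum_nonneg) auto
      moreover have "(\<Sum>j\<in>s. P j) \<le> (\<Sum>j\<in>s. 1)" using elim sI unfolding I_def by (intro sum_mono) auto
      ultimately show ?case using s cs by simp
    qed
  qed
  interpret O: prob_space \<Omega> unfolding \<Omega>_def by (rule prob_space_PiM) (rule PB)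
  define F where "F = measure B {..t}"
  define blk where "blk b = {b*m+1..b*m+m}" for b
  have blkI: "blk b \<subseteq> I" if "b < k" for b
  proof -
    have "b*m+m = Suc b * m" by simp
    also have "\<dots> \<le> k * m" using that by (intro mult_le_mono1) simp
    finally show ?thesis using km by (auto simp: blk_def I_def)
  qed
  have blk_card: "card (blk b) = m" for b by (simp add: blk_def)
  have blk_lt: "x < y" if "b < b'" "x \<in> blk b" "y \<in> blk b'" for b b' x y
  proof -
    have "x \<le> Suc b * m" using that by (auto simp: blk_def)
    also have "\<dots> \<le> b' * m" using that by (intro mult_le_mono1) simp
    finally show ?thesis using that by (auto simp: blk_def)
  qed
  have blk_ne: "b*m+1 \<in> blk b" for b using m1 by (simp add: blk_def)
  define E where "E b = {P \<in> space \<Omega>. \<exists>j\<in>blk b. t < P j}" for b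
  define A where "A b j = (if j \<in> blk b then {..t} else (UNIV :: real set))" for b j
  have Eeq: "E b = space \<Omega> - PiE I (A b)" if "b < k" for b
  proof (intro set_eqI iffI)
    fix P assume "P \<in> E b"
    then show "P \<in> space \<Omega> - PiE I (A b)"
      using blkI[OF that] unfolding E_def spO A_def by (auto simp: PiE_iff) (meson in_mono not_le)
  next
    fix P assume P: "P \<in> space \<Omega> - PiE I (A b)"
    then have "P \<in> extensional I" by (simp add: spO PiE_iff)
    with P obtain j where "j \<in> I" "P j \<notin> A b j" by (auto simp: spO PiE_iff)
    then have "j \<in> blk b" "t < P j" by (auto simp: A_def split: if_splits)
    then show "P \<in> E b" using P unfolding E_def by blast
  qed
  have PiEm: "PiE I (A b) \<in> sets \<Omega>" for b
    unfolding \<Omega>_def by (rule sets_PiM_I_finite) (auto simp: I_def A_def sB)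
  have Emeas: "E b \<in> sets \<Omega>" if "b < k" for b
    using Eeq[OF that] PiEm by auto
  have probE: "measure \<Omega> (E b) = 1 - F ^ m" if "b < k" for b
  proof -
    have "measure \<Omega> (E b) = 1 - measure \<Omega> (PiE I (A b))"
      using Eeq[OF that] O.prob_compl[OF PiEm] by simp
    also have "measure \<Omega> (PiE I (A b)) = (\<Prod>j\<in>I. measure B (A b j))"
      unfolding \<Omega>_def I_def by (rule P.prob_times) (auto simp: A_def sB)
    also have "\<dots> = (\<Prod>j\<in>I. if j \<in> blk b then F else 1)"
      using B.prob_space spB by (intro prod.cong) (auto simp: A_def F_def)
    also have "\<dots> = (\<Prod>j\<in>I \<inter> blk b. F)"
      by (rule prod.inter_restrict[symmetric]) (simp add: I_def)
    also have "I \<inter> blk b = blk b" using blkI[OF that] by auto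
    also have "(\<Prod>j\<in>blk b. F) = F ^ m" by (simp add: blk_card)
    finally show ?thesis .
  qed
  define g where "g P = (\<Sum>b<k. t * indicator (E b) P)" for P :: "nat \<Rightarrow> real"
  have gint: "integrable \<Omega> g"
    unfolding g_def
    by (rule Bochner_Integration.integrable_sum[where f="\<lambda>b P. t * indicator (E b) P"]) (auto intro!: integrable_mult_right integrable_real_indicator Emeas simp: O.emeasure_eq_measure)
  have gval: "integral\<^sup>L \<Omega> g = real k * t * (1 - F ^ m)"
  proof -
    have "integral\<^sup>L \<Omega> g = (\<Sum>b<k. integral\<^sup>L \<Omega> (\<lambda>P. t * indicator (E b) P))"
      unfolding g_def
      by (rule Bochner_Integration.integral_sum[where f="\<lambda>b P. t * indicator (E b) P"]) (auto intro!: integrable_mult_right integrable_real_indicator Emeas simp: O.emeasure_eq_measure)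
    also have "\<dots> = (\<Sum>b<k. t * (1 - F ^ m))"
    proof (rule sum.cong)
      fix b assume "b \<in> {..<k}"
      then have "b < k" by simp
      have "E b \<inter> space \<Omega> = E b" unfolding E_def by auto
      then show "integral\<^sup>L \<Omega> (\<lambda>P. t * indicator (E b) P) = t * (1 - F ^ m)"
        using probE[OF \<open>b < k\<close>] by simp
    qed simp
    finally show ?thesis by simp
  qed
  have AEgf: "AE P in \<Omega>. g P \<le> f P"
    using AE01
  proof eventually_elim
    case (elim P)
    define c where "c b = (if \<exists>j\<in>blk b. t < P j then (SOME j. j \<in> blk b \<and> t < P j) else b*m+1)" for b
    have cb: "c b \<in> blk b" for b
    proof (cases "\<exists>j\<in>blk b. t < P j")
      case True
      then have "\<exists>j. j \<in> blk b \<and> t < P j" by blast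
      from someI_ex[OF this] show ?thesis using True by (simp add: c_def)
    qed (use blk_ne[of b] in \<open>simp add: c_def\<close>)
    have cE: "t < P (c b)" if "P \<in> E b" for b
    proof -
      from that have ex: "\<exists>j\<in>blk b. t < P j" by (simp add: E_def)
      then have "\<exists>j. j \<in> blk b \<and> t < P j" by blast
      from someI_ex[OF this] show ?thesis using ex by (simp add: c_def)
    qed
    have inj: "inj_on c {..<k}"
    proof (rule inj_onI)
      fix b b' assume "b \<in> {..<k}" "b' \<in> {..<k}" "c b = c b'"
      show "b = b'"
      proof (rule ccontr)
        assume "b \<noteq> b'"
        then consider "b < b'" | "b' < b" by linarith
        then show False
          using blk_lt[OF _ cb cb, of b b'] blk_lt[OF _ cb cb, of b' b] \<open>c b = c b'\<close> by cases auto
      qed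
    qed
    have sS: "c ` {..<k} \<in> S"
      unfolding S_def using cb blkI inj by (auto simp: card_image)
    have "g P \<le> (\<Sum>b<k. P (c b))"
      unfolding g_def
    proof (rule sum_mono)
      fix b assume "b \<in> {..<k}"
      then have "c b \<in> I" using cb blkI by auto
      then show "t * indicator (E b) P \<le> P (c b)"
        using cE[of b] elim by (cases "P \<in> E b") (auto simp: indicator_def less_imp_le)
    qed
    also have "\<dots> = (\<Sum>j\<in>c ` {..<k}. P j)" by (simp add: sum.reindex[OF inj])
    also have "\<dots> \<le> f P" unfolding f_def using finS sS by (intro Max_ge) auto
    finally show ?case .
  qed
  have "integral\<^sup>L \<Omega> g \<le> integral\<^sup>L \<Omega> f"
    by (rule integral_mono_AE[OF gint fint AEgf])
  then show ?thesis
    unfolding feq gval using \<Omega>_def I_def F_def by simp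
qed



lemma exp_m3: "exp (-3::real) \<le> 1/16"
proof -
  have "exp (3::real) = exp (3/32) ^ 32"
    using exp_of_nat_mult[of 32 "3/32::real"] by simp
  moreover have "(35/32::real) ^ 32 \<le> exp (3/32) ^ 32"
    using exp_ge_add_one_self[of "3/32::real"] by (intro power_mono) auto
  moreover have "(16::real) \<le> (35/32) ^ 32" by (simp add: power_divide)
  ultimately have "16 \<le> exp (3::real)" by linarith
  then show ?thesis by (simp add: exp_minus field_simps)
qed

theorem proposition2p2:
  fixes \<beta> :: real and d k :: nat
  assumes "\<beta> > 0" and "k \<ge> 1" and "d \<ge> 1"
    and "1 \<le> \<beta>"
    and "\<beta> \<le> 1 + (1/2) * ln (real d / (8 * max (2 * real k) 28))"
  shows "(\<integral>P. Max {(\<Sum>j\<in>s. P j) | s. s \<subseteq> {1..d} \<and> card s = k}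
            \<partial>(PiM {1..d} (\<lambda>_. beta_distr \<beta> \<beta>))) \<ge> (3/4) * real k"
proof -
  note bpos = assms(1) and k1 = assms(2) and d1 = assms(3) and b1 = assms(4) and bub = assms(5)
  define B where "B = beta_distr \<beta> \<beta>"
  have PB: "prob_space B" unfolding B_def using prob_space_beta[OF bpos bpos] .
  interpret B: prob_space B by fact
  have sB: "sets B = sets borel" by (simp add: B_def beta_distr_def)
  have AEB: "AE x in B. 0 \<le> x \<and> x \<le> 1"
    unfolding B_def beta_distr_def by (subst AE_density) (auto simp: beta_density_def)
  define m where "m = d div k"
  define M where "M = max (2 * real k) 28"
  define L where "L = real d / (8 * M)"
  define a where "a = \<beta> - 1"
  have a0: "a \<ge> 0" using b1 by (simp add: a_def)
  have M2k: "M \<ge> 2 * real k" and Mpos: "M > 0" by (auto simp: M_def)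
  have Lpos: "L > 0" using d1 Mpos by (simp add: L_def)
  have aL: "2 * a \<le> ln L" using bub by (simp add: a_def L_def M_def)
  have expL: "exp (2 * a) \<le> L"
    using aL Lpos by (metis exp_le_cancel_iff exp_ln)
  have "1 \<le> exp (2 * a)" using a0 by simp
  with expL have L1: "L \<ge> 1" by linarith
  have kpos: "real k > 0" using k1 by simp
  have "real d = real m * real k + real (d mod k)"
    unfolding m_def by (metis of_nat_add of_nat_mult div_mult_mod_eq)
  moreover have "real (d mod k) \<le> real k" using k1 by simp
  ultimately have "real d \<le> (real m + 1) * real k" by (simp add: algebra_simps)
  then have dk: "real d / real k \<le> real m + 1" using kpos by (simp add: field_simps)
  have "16 * L \<le> real d / real k"
    unfolding L_def using Mpos kpos M2k d1
    by (simp add: field_simps)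
  with dk L1 have m15: "real m \<ge> 15 * L" by linarith
  then have m1: "m \<ge> 1" using L1 by simp
  have km: "k * m \<le> d" unfolding m_def by (simp add: mult.commute)
  define t :: real where "t = 4/5"
  have main: "(\<integral>P. Max {(\<Sum>j\<in>s. P j) | s. s \<subseteq> {1..d} \<and> card s = k}
            \<partial>(PiM {1..d} (\<lambda>_. B))) \<ge> real k * t * (1 - measure B {..t} ^ m)"
    by (rule block_bound[OF PB sB AEB km m1]) (simp add: t_def)
  define F where "F = measure B {..t}"
  define Q where "Q = measure B {t<..}"
  have "space B - {..t} = {t<..}" using sets_eq_imp_space_eq[OF sB] by auto
  then have FQ: "F = 1 - Q" using B.prob_compl[of "{..t}"] sB unfolding F_def Q_def by simp
  have F0: "0 \<le> F" unfolding F_def by simp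
  have Qlow: "Q \<ge> (4*t) powr a * (1-t) powr \<beta> / \<beta>"
    unfolding Q_def B_def a_def using tail_lower[OF b1, of t] by (simp add: t_def)
  have "(4*t) powr a * (1-t) powr \<beta> = (16/25) powr a / 5"
  proof -
    have "(1-t) powr \<beta> = (1/5::real) powr (a + 1)" unfolding a_def t_def by simp
    also have "\<dots> = (1/5) powr a * (1/5)" by (simp add: powr_add)
    finally have "(1-t) powr \<beta> = (1/5) powr a * (1/5)" .
    then have "(4*t) powr a * (1-t) powr \<beta> = (16/5::real) powr a * (1/5) powr a / 5"
      by (simp add: t_def)
    also have "\<dots> = (16/5 * (1/5)::real) powr a / 5" using powr_mult[of "16/5::real" "1/5" a] by simp
    finally show ?thesis by simp
  qed
  moreover have "(16/25::real) powr a \<ge> exp (-a)"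
  proof -
    have "ln (25/16::real) \<le> 25/16 - 1" by (rule ln_le_minus_one) simp
    then have "ln (16/25::real) \<ge> -1" by (simp add: ln_div)
    then have "exp (-a) \<le> exp (a * ln (16/25))" using a0
      by (intro exp_le_cancel_iff[THEN iffD2]) (metis mult_left_mono mult_minus1_right)
    then show ?thesis by (simp add: powr_def)
  qed
  ultimately have "Q \<ge> exp (-a) / 5 / \<beta>"
  proof -
    assume eq: "(4*t) powr a * (1-t) powr \<beta> = (16/25) powr a / 5" and ge: "(16/25::real) powr a \<ge> exp (-a)"
    have "Q \<ge> (16/25) powr a / 5 / \<beta>" using Qlow eq by simp
    moreover have "(16/25) powr a / 5 / \<beta> \<ge> exp (-a) / 5 / \<beta>"
      using ge bpos by (intro divide_right_mono) auto
    ultimately show ?thesis by linarith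
  qed
  then have Qlow2: "Q \<ge> exp (-a) / 5 / \<beta>" .
  have Qm: "Q * real m \<ge> 3"
  proof -
    have ee: "exp (-a) * exp (2*a) = exp a" by (simp add: mult_exp_exp)
    have "exp (-a) / 5 / \<beta> * (15 * exp (2*a)) = 3 * (exp (-a) * exp (2*a)) / \<beta>"
      by (simp add: field_simps)
    also have "\<dots> = 3 * exp a / \<beta>" using ee by simp
    finally have e1: "exp (-a) / 5 / \<beta> * (15 * exp (2*a)) = 3 * exp a / \<beta>" .
    have "exp a \<ge> \<beta>" using exp_ge_add_one_self[of a] by (simp add: a_def)
    then have e2: "3 * exp a / \<beta> \<ge> 3" using bpos by (simp add: field_simps)
    have "exp (-a) / 5 / \<beta> * (15 * exp (2*a)) \<le> Q * real m"
      using Qlow2 m15 expL bpos by (intro mult_mono) (auto simp: Q_def)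
    with e1 e2 show ?thesis by linarith
  qed
  have "F ^ m \<le> exp (-Q) ^ m"
    using F0 FQ exp_ge_add_one_self[of "-Q"] by (intro power_mono) auto
  also have "\<dots> = exp (-(Q * real m))" using exp_of_nat_mult[of m "-Q"] by (simp add: mult.commute)
  also have "\<dots> \<le> exp (-3)" using Qm by simp
  also have "\<dots> \<le> 1/16" by (rule exp_m3)
  finally have "F ^ m \<le> 1/16" .
  then have "t * (1 - F ^ m) \<ge> 3/4" unfolding t_def by simp
  then have "real k * (t * (1 - F ^ m)) \<ge> real k * (3/4)" using kpos by (intro mult_left_mono) auto
  then have "real k * t * (1 - F ^ m) \<ge> (3/4) * real k" by (simp add: algebra_simps)
  then show ?thesis using main unfolding B_def F_def by simp
qed

end
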